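(* Let $G_1,\dots,G_K$ be a partition of $[n]$ with $n_k=|G_k|\ge1$, and let $U_1^\ast\in\mathbb R^{n\times K}$ have $k$-th column $\frac{1}{\sqrt{n_k}}\mathbf 1_{G_k}$. There exists $R_3>0$ such that for every $\Delta_1\in\mathbb R^{n\times K}$ satisfying $(U_1^\ast)_{ij}=0\Rightarrow(\Delta_1)_{ij}=0$, $$\|\Delta_1(U_1^\ast)^T\mathbf 1_n+U_1^\ast\Delta_1^T\mathbf 1_n\|_F^2\ge R_3\|\Delta_1\|_F^2.$$
   Context: $\mathbf 1_{G_k}\in\mathbb R^n$ is the indicator vector of $G_k$ and $\mathbf 1_n$ the all-ones vector. *)

theory Defs
  imports "HOL-Analysis.Analysis"
begin

definition frob_norm :: "real ^ 'k ^ 'n \<Rightarrow> real" where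
  "frob_norm A = sqrt (\<Sum>i\<in>UNIV. \<Sum>j\<in>UNIV. (A $ i $ j)\<^sup>2)"

definition indicator_vec :: "'n set \<Rightarrow> real ^ 'n" where
  "indicator_vec S = (\<chi> i. if i \<in> S then 1 else 0)"

definition Ustar :: "('k \<Rightarrow> 'n set) \<Rightarrow> real ^ 'k ^ 'n" where
  "Ustar G = (\<chi> i j. (1 / sqrt (real (card (G j)))) * (indicator_vec (G j) $ i))"

end

theory Submission
  imports Defs
begin

lemma sum_collapse:
  fixes f :: "'k::finite \<Rightarrow> real"
  assumes "\<And>j. j \<noteq> a \<Longrightarrow> f j = 0"
  shows "(\<Sum>j\<in>UNIV. f j) = f a"
  using assms by (subst sum.remove[of UNIV a]) auto

theorem lemma17:
  fixes G :: "'k::finite \<Rightarrow> 'n::finite set"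
  assumes disj: "\<And>k l. k \<noteq> l \<Longrightarrow> G k \<inter> G l = {}"
    and cover: "(\<Union>k. G k) = UNIV"
    and nonempty: "\<And>k. card (G k) \<ge> 1"
  shows "\<exists>R3 > 0. \<forall>\<Delta> :: real ^ 'k ^ 'n.
           (\<forall>i j. Ustar G $ i $ j = 0 \<longrightarrow> \<Delta> $ i $ j = 0) \<longrightarrow>
           (norm ((\<Delta> ** transpose (Ustar G)) *v vec 1 + (Ustar G ** transpose \<Delta>) *v vec 1))\<^sup>2
             \<ge> R3 * (frob_norm \<Delta>)\<^sup>2"
proof (intro exI[of _ 1] conjI allI impI)
  fix \<Delta> :: "real ^ 'k ^ 'n"
  assume supp: "\<forall>i j. Ustar G $ i $ j = 0 \<longrightarrow> \<Delta> $ i $ j = 0"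
  define c where "c j = sqrt (real (card (G j)))" for j
  define g where "g i = (SOME k. i \<in> G k)" for i
  define S where "S j = (\<Sum>l\<in>UNIV. \<Delta> $ l $ j)" for j
  define d where "d i = \<Delta> $ i $ g i" for i
  have cpos: "c j \<ge> 1" for j
    using nonempty[of j] by (simp add: c_def)
  have c2: "(c j)^2 = real (card (G j))" for j by (simp add: c_def)
  have gi: "i \<in> G (g i)" for i
  proof -
    have "\<exists>k. i \<in> G k" using cover by blast
    thus ?thesis unfolding g_def by (rule someI_ex)
  qed
  have notin: "j \<noteq> g i \<Longrightarrow> i \<notin> G j" for i j using disj[of j "g i"] gi[of i] by blast
  have U: "Ustar G $ i $ j = (if i \<in> G j then 1 / c j else 0)" for i j
    by (simp add: Ustar_def indicator_vec_def c_def)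
  have Dz: "j \<noteq> g i \<Longrightarrow> \<Delta> $ i $ j = 0" for i j
    using supp notin[of j i] U[of i j] by auto
  have colsum: "(\<Sum>l\<in>UNIV. Ustar G $ l $ j) = c j" for j
  proof -
    have "(\<Sum>l\<in>UNIV. Ustar G $ l $ j) = (\<Sum>l\<in>G j. 1 / c j)"
      unfolding U by (simp add: sum.If_cases)
    also have "\<dots> = real (card (G j)) / c j" by simp
    also have "\<dots> = c j" using c2[of j] cpos[of j]
      by (simp add: field_simps power2_eq_square)
    finally show ?thesis .
  qed
  define v where "v = (\<Delta> ** transpose (Ustar G)) *v vec 1 + (Ustar G ** transpose \<Delta>) *v vec 1"
  have vi: "v $ i = d i * c (g i) + S (g i) / c (g i)" for i
  proof -
    have a: "((\<Delta> ** transpose (Ustar G)) *v vec 1) $ i = (\<Sum>j\<in>UNIV. \<Delta> $ i $ j * c j)"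
    proof -
      have "((\<Delta> ** transpose (Ustar G)) *v vec 1) $ i = (\<Sum>k\<in>UNIV. \<Sum>j\<in>UNIV. \<Delta> $ i $ j * Ustar G $ k $ j)"
        by (simp add: matrix_vector_mult_def matrix_matrix_mult_def transpose_def)
      also have "\<dots> = (\<Sum>j\<in>UNIV. \<Sum>k\<in>UNIV. \<Delta> $ i $ j * Ustar G $ k $ j)"
        by (rule sum.swap)
      also have "\<dots> = (\<Sum>j\<in>UNIV. \<Delta> $ i $ j * c j)"
        by (simp only: sum_distrib_left[symmetric] colsum)
      finally show ?thesis .
    qed
    have b: "((Ustar G ** transpose \<Delta>) *v vec 1) $ i = (\<Sum>j\<in>UNIV. Ustar G $ i $ j * S j)"
    proof -
      have "((Ustar G ** transpose \<Delta>) *v vec 1) $ i = (\<Sum>k\<in>UNIV. \<Sum>j\<in>UNIV. Ustar G $ i $ j * \<Delta> $ k $ j)"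
        by (simp add: matrix_vector_mult_def matrix_matrix_mult_def transpose_def)
      also have "\<dots> = (\<Sum>j\<in>UNIV. \<Sum>k\<in>UNIV. Ustar G $ i $ j * \<Delta> $ k $ j)"
        by (rule sum.swap)
      also have "\<dots> = (\<Sum>j\<in>UNIV. Ustar G $ i $ j * S j)"
        by (simp only: sum_distrib_left[symmetric] S_def)
      finally show ?thesis .
    qed
    have a2: "(\<Sum>j\<in>UNIV. \<Delta> $ i $ j * c j) = d i * c (g i)"
      by (subst sum_collapse[where a="g i"]) (auto simp: Dz d_def)
    have b2: "(\<Sum>j\<in>UNIV. Ustar G $ i $ j * S j) = S (g i) / c (g i)"
      by (subst sum_collapse[where a="g i"]) (auto simp: U notin gi)
    show ?thesis unfolding v_def using a b a2 b2 by simp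
  qed
  have frob: "(frob_norm \<Delta>)\<^sup>2 = (\<Sum>i\<in>UNIV. (d i)^2)"
  proof -
    have "(frob_norm \<Delta>)\<^sup>2 = (\<Sum>i\<in>UNIV. \<Sum>j\<in>UNIV. (\<Delta> $ i $ j)\<^sup>2)"
      unfolding frob_norm_def by (simp add: sum_nonneg)
    also have "\<dots> = (\<Sum>i\<in>UNIV. (d i)^2)"
      by (rule sum.cong[OF refl], subst sum_collapse) (auto simp: Dz d_def)
    finally show ?thesis .
  qed
  have cross: "(\<Sum>i\<in>UNIV. d i * S (g i)) \<ge> 0"
  proof -
    have "(\<Sum>i\<in>UNIV. d i * S (g i)) = (\<Sum>i\<in>UNIV. \<Sum>j\<in>UNIV. \<Delta> $ i $ j * S j)"
      by (rule sum.cong[OF refl], subst sum_collapse) (auto simp: Dz d_def)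
    also have "\<dots> = (\<Sum>j\<in>UNIV. S j * S j)"
      by (subst sum.swap) (simp add: S_def sum_distrib_left sum_distrib_right mult.commute)
    also have "\<dots> \<ge> 0" by (simp add: sum_nonneg)
    finally show ?thesis by simp
  qed
  have pt: "(v $ i)^2 \<ge> (d i)^2 + 2 * (d i * S (g i))" for i
  proof -
    have cp: "c (g i) > 0" using cpos[of "g i"] by simp
    have "(v $ i)^2 = (d i)^2 * (c (g i))^2 + 2 * (d i * S (g i)) + (S (g i) / c (g i))^2"
      unfolding vi using cp by (simp add: power2_eq_square field_simps)
    moreover have "(d i)^2 * (c (g i))^2 \<ge> (d i)^2"
      using c2[of "g i"] nonempty[of "g i"] by (simp add: mult_le_cancel_left1)
    ultimately show ?thesis by (smt (verit) zero_le_power2)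
  qed
  have "(norm v)^2 = (\<Sum>i\<in>UNIV. (v $ i)^2)"
    unfolding power2_norm_eq_inner inner_vec_def by (simp add: power2_eq_square)
  also have "\<dots> \<ge> (\<Sum>i\<in>UNIV. (d i)^2 + 2 * (d i * S (g i)))"
    by (rule sum_mono) (rule pt)
  finally have "(norm v)^2 \<ge> (\<Sum>i\<in>UNIV. (d i)^2) + 2 * (\<Sum>i\<in>UNIV. d i * S (g i))"
    by (simp add: sum.distrib sum_distrib_left)
  with cross frob show "1 * (frob_norm \<Delta>)\<^sup>2 \<le> (norm ((\<Delta> ** transpose (Ustar G)) *v vec 1 + (Ustar G ** transpose \<Delta>) *v vec 1))\<^sup>2"
    unfolding v_def by simp
qed simp

end
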